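(* Let $f$ be a bicritical rational map of degree $d$ and let $p$ be a prime number not dividing $d$. Then for every $k\in\mathbb{N}$, the group $\mathrm{Deck}(f^k)$ has no element of order $p$.
   Context: A rational map of degree $d\ge2$ is bicritical if it has exactly two critical points. $\mathrm{Deck}(F)=\{\tau \text{ Möbius} : F\circ\tau=F\}$. $f^k$ is the $k$-th iterate. *)

theory Defs
  imports "HOL-Analysis.Analysis" "HOL-Computational_Algebra.Polynomial"
begin

text \<open>The Riemann sphere is modelled as complex option: Some z is the finite
point z, None is the point at infinity.\<close>

definition rat_eval :: "complex poly \<Rightarrow> complex poly \<Rightarrow> complex option \<Rightarrow> complex option" where
  "rat_eval P Q z =
     (case z of
        Some w \<Rightarrow> (if poly Q w = 0 then None else Some (poly P w / poly Q w))
      | None \<Rightarrow> (if degree P > degree Q then None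
                 else if degree P < degree Q then Some 0
                 else Some (lead_coeff P / lead_coeff Q)))"

definition is_rational_map :: "(complex option \<Rightarrow> complex option) \<Rightarrow> nat \<Rightarrow> bool" where
  "is_rational_map g d \<longleftrightarrow>
     (\<exists>P Q. coprime P Q \<and> Q \<noteq> 0 \<and> max (degree P) (degree Q) = d \<and> g = rat_eval P Q)"

definition is_mobius :: "(complex option \<Rightarrow> complex option) \<Rightarrow> bool" where
  "is_mobius \<tau> \<longleftrightarrow>
     (\<exists>a b c d. a * d - b * c \<noteq> 0 \<and> \<tau> = rat_eval [:b, a:] [:d, c:])"

definition sphere_nhd :: "complex option \<Rightarrow> real \<Rightarrow> complex option set" where
  "sphere_nhd z e =
     (case z of
        Some w \<Rightarrow> Some ` ball w e
      | None \<Rightarrow> insert None (Some ` {u. e * norm u > 1}))"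

definition critical_point :: "(complex option \<Rightarrow> complex option) \<Rightarrow> complex option \<Rightarrow> bool" where
  "critical_point g z \<longleftrightarrow> (\<forall>e>0. \<not> inj_on g (sphere_nhd z e))"

definition bicritical :: "(complex option \<Rightarrow> complex option) \<Rightarrow> bool" where
  "bicritical g \<longleftrightarrow> card {z. critical_point g z} = 2"

definition deck :: "(complex option \<Rightarrow> complex option) \<Rightarrow> (complex option \<Rightarrow> complex option) set" where
  "deck F = {\<tau>. is_mobius \<tau> \<and> F \<circ> \<tau> = F}"

definition has_order :: "('a \<Rightarrow> 'a) \<Rightarrow> nat \<Rightarrow> bool" where
  "has_order \<tau> n \<longleftrightarrow> n > 0 \<and> \<tau> ^^ n = id \<and> (\<forall>j. 0 < j \<and> j < n \<longrightarrow> \<tau> ^^ j \<noteq> id)"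

end

theory Submission imports Defs "HOL-Computational_Algebra.Polynomial_Factorial"
  "HOL-Computational_Algebra.Fundamental_Theorem_Algebra" "HOL-Number_Theory.Cong"
  "HOL-Computational_Algebra.Field_as_Ring"
begin

lemma dvd_pderiv_zero:
  fixes P :: "complex poly"
  assumes "P dvd pderiv P" "P \<noteq> 0"
  shows "pderiv P = 0"
proof (rule ccontr)
  assume n: "pderiv P \<noteq> 0"
  hence "degree P \<le> degree (pderiv P)" using assms n by (simp add: dvd_imp_degree_le)
  moreover have "degree P > 0" using n by (simp add: pderiv_eq_0_iff)
  ultimately show False by (simp add: degree_pderiv)
qed

lemma card_roots_rsquarefree:
  fixes R :: "complex poly"
  assumes "R \<noteq> 0" "\<And>z. poly R z = 0 \<Longrightarrow> poly (pderiv R) z \<noteq> 0"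
  shows "card {z. poly R z = 0} = degree R"
proof -
  have rs: "rsquarefree R" using assms by (auto simp: rsquarefree_roots)
  have "degree R = degree (smult (lead_coeff R) (\<Prod>z|poly R z = 0. [:-z, 1:]))"
    using complex_poly_decompose_rsquarefree[OF rs] by simp
  also have "\<dots> = degree (\<Prod>z|poly R z = 0. [:-z, 1:])" using assms(1) by simp
  also have "\<dots> = (\<Sum>z|poly R z = 0. degree [:-z, 1:])"
    by (rule degree_prod_eq_sum_degree) auto
  also have "\<dots> = card {z. poly R z = 0}" by simp
  finally show ?thesis by simp
qed

lemma wronskian_nonzero:
  fixes P Q :: "complex poly"
  assumes "coprime P Q" "Q \<noteq> 0" "max (degree P) (degree Q) \<ge> 1"
  shows "pderiv P * Q - P * pderiv Q \<noteq> 0"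
proof
  assume h: "pderiv P * Q - P * pderiv Q = 0"
  hence eq: "pderiv P * Q = P * pderiv Q" by simp
  have "P \<noteq> 0"
  proof
    assume "P = 0"
    with assms(1) have "is_unit Q" by simp
    hence "degree Q = 0" by (simp add: is_unit_iff_degree assms(2))
    with \<open>P = 0\<close> assms(3) show False by simp
  qed
  have "P dvd pderiv P * Q" using eq by simp
  moreover have "coprime P Q" using assms(1) by simp
  ultimately have "P dvd pderiv P" using coprime_dvd_mult_left_iff by blast
  hence "pderiv P = 0" using dvd_pderiv_zero \<open>P \<noteq> 0\<close> by blast
  hence dP: "degree P = 0" by (simp add: pderiv_eq_0_iff)
  have "Q dvd P * pderiv Q" using eq by (metis dvd_triv_right)
  moreover have "coprime Q P" using assms(1) by (simp add: coprime_commute)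
  ultimately have "Q dvd pderiv Q" using coprime_dvd_mult_right_iff by blast
  hence "pderiv Q = 0" using dvd_pderiv_zero assms(2) by blast
  hence "degree Q = 0" by (simp add: pderiv_eq_0_iff)
  with dP assms(3) show False by simp
qed

lemma rat_fiber:
  fixes P Q :: "complex poly"
  assumes cop: "coprime P Q" and Q0: "Q \<noteq> 0" and dg: "max (degree P) (degree Q) = d" and d1: "d \<ge> 1"
  shows "\<exists>B. finite B \<and> (\<forall>w. w \<notin> B \<longrightarrow>
           finite (rat_eval P Q -` {w}) \<and> card (rat_eval P Q -` {w}) = d)"
proof -
  define W where "W = pderiv P * Q - P * pderiv Q"
  have W0: "W \<noteq> 0" unfolding W_def using wronskian_nonzero cop Q0 dg d1 by simp
  define B where "B = {None, rat_eval P Q None} \<union> (\<lambda>z. Some (poly P z / poly Q z)) ` {z. poly W z = 0}"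
  have "finite B" unfolding B_def using poly_roots_finite[OF W0] by simp
  moreover have "finite (rat_eval P Q -` {w}) \<and> card (rat_eval P Q -` {w}) = d" if wB: "w \<notin> B" for w
  proof -
    obtain v where wv: "w = Some v" using wB unfolding B_def by (cases w) auto
    have inf: "rat_eval P Q None \<noteq> Some v" using wB wv unfolding B_def by auto
    define R where "R = P + smult (-v) Q"
    have polyR: "poly R z = poly P z - v * poly Q z" for z unfolding R_def by simp
    have nz: "poly Q z \<noteq> 0" if "poly R z = 0" for z
    proof
      assume "poly Q z = 0"
      hence "poly P z = 0" using that polyR by simp
      with \<open>poly Q z = 0\<close> coprime_poly_0[OF cop, of z] show False by simp
    qed
    have pre: "rat_eval P Q -` {w} = Some ` {z. poly R z = 0}"
    proof (rule set_eqI)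
      fix x
      show "x \<in> rat_eval P Q -` {w} \<longleftrightarrow> x \<in> Some ` {z. poly R z = 0}"
      proof (cases x)
        case None thus ?thesis using inf wv by auto
      next
        case (Some z)
        show ?thesis
        proof
          assume "x \<in> rat_eval P Q -` {w}"
          hence "rat_eval P Q (Some z) = Some v" using Some wv by simp
          hence "poly Q z \<noteq> 0" "poly P z / poly Q z = v"
            unfolding rat_eval_def by (auto split: if_splits)
          hence "poly P z = v * poly Q z" by (simp add: field_simps)
          hence "poly R z = 0" using polyR[of z] by simp
          thus "x \<in> Some ` {z. poly R z = 0}" using Some by simp
        next
          assume "x \<in> Some ` {z. poly R z = 0}"
          hence r: "poly R z = 0" using Some by auto
          hence q: "poly Q z \<noteq> 0" using nz by blast
          have "poly P z = v * poly Q z" using r polyR by simp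
          hence "poly P z / poly Q z = v" using q by simp
          thus "x \<in> rat_eval P Q -` {w}" using Some wv q unfolding rat_eval_def by simp
        qed
      qed
    qed
    have degR: "degree R = d"
    proof (cases "degree P" "degree Q" rule: linorder_cases)
      case less
      hence "v \<noteq> 0" using inf unfolding rat_eval_def by auto
      hence "degree (smult (-v) Q) = degree Q" by simp
      hence "degree P < degree (smult (-v) Q)" using less by simp
      hence "degree R = degree (smult (-v) Q)" unfolding R_def by (rule degree_add_eq_right)
      hence "degree R = degree Q" using \<open>v \<noteq> 0\<close> by simp
      thus ?thesis using dg less by simp
    next
      case greater
      have "degree (smult (-v) Q) < degree P" using greater
        by (meson degree_smult_le le_less_trans)
      hence "degree R = degree P" unfolding R_def by (rule degree_add_eq_left)
      thus ?thesis using dg greater by simp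
    next
      case equal
      have lQ: "lead_coeff Q \<noteq> 0" using Q0 by simp
      have "v \<noteq> lead_coeff P / lead_coeff Q" using inf equal unfolding rat_eval_def by auto
      hence c: "coeff R d \<noteq> 0" using equal dg lQ unfolding R_def by (auto simp: field_simps)
      have "degree R \<le> d" unfolding R_def
        by (intro degree_add_le) (use dg equal in auto)
      moreover have "d \<le> degree R" using c le_degree by blast
      ultimately show ?thesis by simp
    qed
    have R0: "R \<noteq> 0" using degR d1 by auto
    have simple: "poly (pderiv R) z \<noteq> 0" if r: "poly R z = 0" for z
    proof
      assume h: "poly (pderiv R) z = 0"
      have dR: "poly (pderiv R) z = poly (pderiv P) z - v * poly (pderiv Q) z"
        unfolding R_def by (simp add: pderiv_add pderiv_smult pderiv_diff)
      have q: "poly Q z \<noteq> 0" using nz r by blast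
      have e1: "poly P z = v * poly Q z" using r polyR by simp
      have e2: "poly (pderiv P) z = v * poly (pderiv Q) z" using h dR by simp
      have "poly W z = 0" unfolding W_def using e1 e2 by (simp add: algebra_simps)
      moreover have "poly P z / poly Q z = v" using e1 q by simp
      ultimately have "w \<in> B" unfolding B_def wv by auto
      thus False using wB by simp
    qed
    have "finite {z. poly R z = 0}" using poly_roots_finite[OF R0] .
    moreover have "card {z. poly R z = 0} = d" using card_roots_rsquarefree[OF R0 simple] degR by simp
    ultimately show ?thesis unfolding pre by (simp add: card_image)
  qed
  ultimately show ?thesis by blast
qed

lemma iter_fiber:
  fixes f :: "'a \<Rightarrow> 'a"
  assumes "\<exists>B. finite B \<and> (\<forall>w. w \<notin> B \<longrightarrow> finite (f -` {w}) \<and> card (f -` {w}) = d)"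
  shows "\<exists>B. finite B \<and> (\<forall>w. w \<notin> B \<longrightarrow> finite ((f^^k) -` {w}) \<and> card ((f^^k) -` {w}) = d^k)"
proof (induction k)
  case 0
  show ?case
  proof (intro exI[of _ "{}"] conjI allI impI)
    fix w
    have "(f^^0) -` {w} = {w}" by auto
    thus "finite ((f^^0) -` {w})" "card ((f^^0) -` {w}) = d^0" by simp_all
  qed simp
next
  case (Suc k)
  obtain B1 where B1: "finite B1" "\<And>w. w \<notin> B1 \<Longrightarrow> finite (f -` {w}) \<and> card (f -` {w}) = d"
    using assms by blast
  obtain Bk where Bk: "finite Bk" "\<And>w. w \<notin> Bk \<Longrightarrow> finite ((f^^k) -` {w}) \<and> card ((f^^k) -` {w}) = d^k"
    using Suc by blast
  have H: "finite ((f^^Suc k) -` {w}) \<and> card ((f^^Suc k) -` {w}) = d^Suc k"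
    if w: "w \<notin> Bk \<union> (f^^k) ` B1" for w
  proof -
    define S where "S = (f^^k) -` {w}"
    have S: "finite S" "card S = d^k" using Bk(2) w unfolding S_def by auto
    have uB: "u \<notin> B1" if "u \<in> S" for u using that w unfolding S_def by auto
    have eq: "(f^^Suc k) -` {w} = (\<Union>u\<in>S. f -` {u})"
      unfolding S_def funpow_Suc_right by auto
    have fin: "finite (\<Union>u\<in>S. f -` {u})" using S(1) B1(2) uB by blast
    have "card (\<Union>u\<in>S. f -` {u}) = (\<Sum>u\<in>S. card (f -` {u}))"
      by (rule card_UN_disjoint) (use S(1) B1(2) uB in auto)
    also have "\<dots> = (\<Sum>u\<in>S. d)" using B1(2) uB by simp
    also have "\<dots> = d^Suc k" using S by (simp add: mult.commute)
    finally show ?thesis using eq fin by simp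
  qed
  have "finite (Bk \<union> (f^^k) ` B1)" using Bk(1) B1(1) by simp
  thus ?case using H by blast
qed

lemma funpow_mod:
  assumes "\<tau> ^^ p = id"
  shows "\<tau> ^^ n = \<tau> ^^ (n mod p)"
proof -
  have "\<tau> ^^ n = \<tau> ^^ (p * (n div p) + n mod p)" by simp
  also have "\<dots> = (\<tau> ^^ p) ^^ (n div p) \<circ> \<tau> ^^ (n mod p)" by (simp only: funpow_add funpow_mult)
  also have "\<dots> = \<tau> ^^ (n mod p)" using assms by simp
  finally show ?thesis .
qed

lemma no_small_period:
  assumes p: "prime p" and tp: "\<tau> ^^ p = id" and m: "0 < m" "m < p" and fx: "(\<tau> ^^ m) x = x"
  shows "\<tau> x = x"
proof -
  have "\<not> p dvd m" using m by (simp add: nat_dvd_not_less)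
  hence "coprime p m" by (rule prime_imp_coprime_nat[OF p])
  hence "coprime m p" by (simp add: coprime_commute)
  then obtain a where a: "[m * a = Suc 0] (mod p)" using cong_solve_coprime_nat by blast
  have p1: "p > 1" using p prime_gt_1_nat by blast
  have "(m * a) mod p = 1" using a p1 by (simp add: cong_def)
  have it: "((\<tau> ^^ m) ^^ j) x = x" for j
    by (induction j) (simp_all add: fx)
  have "(\<tau> ^^ (m * a)) x = x" using it[of a] by (simp add: funpow_mult mult.commute)
  hence "(\<tau> ^^ ((m * a) mod p)) x = x" using funpow_mod[OF tp, of "m*a"] by simp
  thus ?thesis using \<open>(m * a) mod p = 1\<close> by simp
qed

lemma orbit_dvd:
  assumes p: "prime p" and tp: "\<tau> ^^ p = id"
  shows "finite F \<Longrightarrow> \<tau> ` F \<subseteq> F \<Longrightarrow> (\<forall>x\<in>F. \<tau> x \<noteq> x) \<Longrightarrow> p dvd card F"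
proof (induction "card F" arbitrary: F rule: less_induct)
  case less
  show ?case
  proof (cases "F = {}")
    case True thus ?thesis by simp
  next
    case False
    then obtain x where x: "x \<in> F" by blast
    define Orb where "Orb = (\<lambda>j. (\<tau> ^^ j) x) ` {..<p}"
    have p1: "p > 1" using p prime_gt_1_nat by blast
    have inF: "(\<tau> ^^ j) y \<in> F" if "y \<in> F" for j y
      using that less.prems(2) by (induction j) auto
    have OsubF: "Orb \<subseteq> F" unfolding Orb_def using inF x by auto
    have backeq: "(\<tau> ^^ (p - 1)) (\<tau> y) = y" for y
    proof -
      have "(\<tau> ^^ (p - 1)) (\<tau> y) = (\<tau> ^^ Suc (p - 1)) y" by (simp only: funpow_Suc_right comp_apply)
      also have "Suc (p - 1) = p" using p1 by simp
      finally show ?thesis using tp by simp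
    qed
    have inj: "inj_on (\<lambda>j. (\<tau> ^^ j) x) {..<p}"
    proof (rule inj_onI, rule ccontr)
      fix i j assume i: "i \<in> {..<p}" and j: "j \<in> {..<p}" and e: "(\<tau> ^^ i) x = (\<tau> ^^ j) x" and ne: "i \<noteq> j"
      have key: "False" if ij: "i < j" "j < p" "(\<tau> ^^ i) x = (\<tau> ^^ j) x" for i j
      proof -
        have "(\<tau> ^^ (p - j + i)) x = (\<tau> ^^ (p - j)) ((\<tau> ^^ i) x)" by (simp add: funpow_add)
        also have "\<dots> = (\<tau> ^^ (p - j)) ((\<tau> ^^ j) x)" using ij by simp
        also have "\<dots> = (\<tau> ^^ (p - j + j)) x" by (simp add: funpow_add)
        also have "p - j + j = p" using ij by simp
        finally have "(\<tau> ^^ (p - j + i)) x = x" using tp by simp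
        hence "\<tau> x = x" using no_small_period[OF p tp, of "p - j + i" x] ij by simp
        thus False using less.prems(3) x by blast
      qed
      show False using key[of i j] key[of j i] e i j ne by (cases "i < j") auto
    qed
    have cO: "card Orb = p" unfolding Orb_def using card_image[OF inj] by simp
    define G where "G = F - Orb"
    have finG: "finite G" using less.prems(1) unfolding G_def by simp
    have tG: "\<tau> ` G \<subseteq> G"
    proof
      fix z assume "z \<in> \<tau> ` G"
      then obtain y where y: "y \<in> G" "z = \<tau> y" by blast
      have "z \<in> F" using y less.prems(2) unfolding G_def by auto
      moreover have "z \<notin> Orb"
      proof
        assume "z \<in> Orb"
        then obtain j where j: "j < p" "z = (\<tau> ^^ j) x" unfolding Orb_def by auto
        have "y = (\<tau> ^^ (p - 1)) z" using backeq y by simp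
        also have "\<dots> = (\<tau> ^^ (p - 1 + j)) x" by (simp only: j(2) funpow_add comp_apply)
        also have "\<dots> = (\<tau> ^^ ((p - 1 + j) mod p)) x" by (rule fun_cong[OF funpow_mod[OF tp]])
        finally have "y \<in> Orb" unfolding Orb_def using p1 by auto
        thus False using y unfolding G_def by simp
      qed
      ultimately show "z \<in> G" unfolding G_def by simp
    qed
    have nfG: "\<forall>y\<in>G. \<tau> y \<noteq> y" using less.prems(3) unfolding G_def by auto
    have finO: "finite Orb" using OsubF less.prems(1) finite_subset by blast
    have cF: "card F = card Orb + card G" unfolding G_def
      using card_Diff_subset[OF finO OsubF] card_mono[OF less.prems(1) OsubF] by simp
    have "card G < card F" using cF cO p1 by simp
    hence "p dvd card G" using less.hyps finG tG nfG by blast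
    moreover note cF
    ultimately show ?thesis using cO by simp
  qed
qed

lemma mobius_fix_finite:
  assumes "is_mobius \<tau>" "\<tau> \<noteq> id"
  shows "finite {z. \<tau> z = z}"
proof -
  obtain a b c d where abcd: "a * d - b * c \<noteq> 0" "\<tau> = rat_eval [:b, a:] [:d, c:]"
    using assms(1) unfolding is_mobius_def by blast
  define Pf where "Pf = [:-b, d - a, c:]"
  have polyPf: "poly Pf z = - b + (d - a) * z + c * z * z" for z
    unfolding Pf_def by (simp add: algebra_simps)
  show ?thesis
  proof (cases "Pf = 0")
    case True
    hence b0: "b = 0" and da: "d = a" and c0: "c = 0" unfolding Pf_def by auto
    hence a0: "a \<noteq> 0" using abcd(1) by auto
    have "\<tau> z = z" for z
    proof (cases z)
      case None thus ?thesis using abcd(2) b0 c0 da a0 unfolding rat_eval_def by simp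
    next
      case (Some w) thus ?thesis using abcd(2) b0 c0 da a0 unfolding rat_eval_def by simp
    qed
    hence "\<tau> = id" by auto
    thus ?thesis using assms(2) by simp
  next
    case False
    have "{z. \<tau> z = z} \<subseteq> insert None (Some ` {z. poly Pf z = 0})"
    proof
      fix x assume x: "x \<in> {z. \<tau> z = z}"
      show "x \<in> insert None (Some ` {z. poly Pf z = 0})"
      proof (cases x)
        case None thus ?thesis by simp
      next
        case (Some w)
        have fx: "rat_eval [:b, a:] [:d, c:] (Some w) = Some w" using x Some abcd(2) by simp
        hence q: "d + w * c \<noteq> 0" and e: "(b + w * a) / (d + w * c) = w"
          unfolding rat_eval_def by (auto split: if_splits)
        hence "b + w * a = w * (d + w * c)" by (simp add: field_simps)
        moreover have "poly Pf w = w * (d + w * c) - (b + w * a)" using polyPf[of w] by (simp add: algebra_simps)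
        ultimately have "poly Pf w = 0" by simp
        thus ?thesis using Some by simp
      qed
    qed
    moreover have "finite (insert None (Some ` {z. poly Pf z = 0}))"
      using poly_roots_finite[OF False] by simp
    ultimately show ?thesis by (rule finite_subset)
  qed
qed

theorem mainTheorem6:
  fixes f :: "complex option \<Rightarrow> complex option" and d p :: nat
  assumes "is_rational_map f d" and "d \<ge> 2" and "bicritical f"
    and "prime p" and "\<not> p dvd d"
  shows "\<forall>k::nat. \<not> (\<exists>\<tau> \<in> deck (f ^^ k). has_order \<tau> p)"
proof (intro allI notI)
  fix k :: nat
  assume "\<exists>\<tau> \<in> deck (f ^^ k). has_order \<tau> p"
  then obtain \<tau> where dk: "\<tau> \<in> deck (f ^^ k)" and ho: "has_order \<tau> p" by blast
  have mob: "is_mobius \<tau>" and inv: "(f ^^ k) \<circ> \<tau> = f ^^ k" using dk unfolding deck_def by auto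
  have tp: "\<tau> ^^ p = id" and small: "\<And>j. 0 < j \<Longrightarrow> j < p \<Longrightarrow> \<tau> ^^ j \<noteq> id"
    using ho unfolding has_order_def by auto
  have p1: "p > 1" using assms(4) prime_gt_1_nat by blast
  have "\<tau> ^^ 1 \<noteq> id" using small[of 1] p1 by simp
  hence tid: "\<tau> \<noteq> id" by simp
  have finfix: "finite {z. \<tau> z = z}" using mobius_fix_finite[OF mob tid] .
  obtain P Q where PQ: "coprime P Q" "Q \<noteq> 0" "max (degree P) (degree Q) = d" "f = rat_eval P Q"
    using assms(1) unfolding is_rational_map_def by blast
  have "\<exists>B. finite B \<and> (\<forall>w. w \<notin> B \<longrightarrow> finite (f -` {w}) \<and> card (f -` {w}) = d)"
    using rat_fiber[OF PQ(1) PQ(2) PQ(3)] assms(2) PQ(4) by simp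
  from iter_fiber[OF this, of k] obtain B where
    B: "finite B" "\<And>w. w \<notin> B \<Longrightarrow> finite ((f^^k) -` {w}) \<and> card ((f^^k) -` {w}) = d^k" by blast
  have finE: "finite (B \<union> (f^^k) ` {z. \<tau> z = z})" using B(1) finfix by simp
  have infU: "infinite (UNIV :: complex option set)" by (simp add: infinite_UNIV_char_0)
  obtain w where w: "w \<notin> B \<union> (f^^k) ` {z. \<tau> z = z}"
    using ex_new_if_finite[OF infU finE] by blast
  define F where "F = (f^^k) -` {w}"
  have F: "finite F" "card F = d^k" using B(2) w unfolding F_def by auto
  have tF: "\<tau> ` F \<subseteq> F"
  proof
    fix y assume "y \<in> \<tau> ` F"
    then obtain x where x: "x \<in> F" "y = \<tau> x" by blast
    have "(f^^k) (\<tau> x) = (f^^k) x" using fun_cong[OF inv, of x] by simp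
    thus "y \<in> F" using x unfolding F_def by simp
  qed
  have nf: "\<forall>x\<in>F. \<tau> x \<noteq> x"
  proof
    fix x assume x: "x \<in> F"
    show "\<tau> x \<noteq> x"
    proof
      assume "\<tau> x = x"
      moreover have "(f^^k) x = w" using x unfolding F_def by simp
      ultimately have "w \<in> (f^^k) ` {z. \<tau> z = z}" by blast
      thus False using w by simp
    qed
  qed
  have "p dvd card F" using orbit_dvd[OF assms(4) tp F(1) tF nf] .
  hence "p dvd d^k" using F(2) by simp
  hence "p dvd d" using prime_dvd_power assms(4) by blast
  thus False using assms(5) by simp
qed

end
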